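(* Let $n \ge 2$, $V=[1:n]$. Let $A$ be a deterministic adaptive algorithm (in the learning model described in the context, with no restriction on intervention sizes) such that for every total ordering $\sigma$ of $V$, when the ground truth is $\vec{K}_n(\sigma)$, the sequence of interventions $\mathcal{I}$ designed by $A$ results in all edges of $K_n$ being oriented. Then there exists a total ordering $\sigma$ of $V$ such that the family $\mathcal{I}$ designed by $A$ on ground truth $\vec{K}_n(\sigma)$ is a separating system on $V$, i.e. for every pair of distinct $i,j \in V$ there exists $I \in \mathcal{I}$ containing exactly one of $i$ and $j$.
   Context: For a total ordering $\sigma$ of $V=[1:n]$, $\vec{K}_n(\sigma)$ is the DAG on the complete graph $K_n$ in which each edge $\{u,v\}$ is directed from the earlier to the later vertex in $\sigma$. Learning model: the learner maintains a partially directed graph, initially the undirected complete graph $K_n$ (the true DAG is unknown). Performing an intervention on a set $I \subseteq V$ does the following: (R0) every edge with exactly one endpoint in $I$ becomes oriented as in the true DAG; then the following Meek rules are applied repeatedly until no further edge can be oriented: (R1) orient $a-b$ as $a\to b$ if there is $c$ with $c\to a$ and $c,b$ non-adjacent; (R2) orient $a-b$ as $a\to b$ if there is $c$ with $a\to c$ and $c\to b$; (R3) orient $a-b$ as $a\to b$ if there are $c,d$ with $a-c$, $a-d$, $c\to b$, $d\to b$ and $c,d$ non-adjacent; (R4) orient $a-c$ as $a\to c$ if there are $b,d$ with $b\to c$, $a-d$, $a-b$, $d\to b$ and $c,d$ non-adjacent. A deterministic adaptive algorithm chooses the intervention $I_{m+1}$ as a deterministic function of the partially directed graph obtained after $I_1,\ldots,I_m$;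 $\mathcal{I}=\{I_1,I_2,\ldots\}$ is the resulting family of interventions. *)

theory Defs
  imports Main
begin

text \<open>A partially directed graph is given by its skeleton
  E (a symmetric irreflexive relation; an unordered edge {a,b} is present iff (a,b) \<in> E)
  together with the set D of oriented edges: (a,b) \<in> D means a \<rightarrow> b.\<close>

type_synonym vertex = nat
type_synonym edges = "(vertex \<times> vertex) set"

definition V :: "nat \<Rightarrow> vertex set" where
  "V n = {1..n}"

definition Kn :: "nat \<Rightarrow> edges" where
  "Kn n = {(a,b). a \<in> V n \<and> b \<in> V n \<and> a \<noteq> b}"

definition total_ordering :: "nat \<Rightarrow> vertex list \<Rightarrow> bool" where
  "total_ordering n \<sigma> \<longleftrightarrow> distinct \<sigma> \<and> set \<sigma> = V n"

definition dag_of :: "vertex list \<Rightarrow> edges" where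
  "dag_of \<sigma> = {(u,v). \<exists>i j. i < j \<and> j < length \<sigma> \<and> \<sigma> ! i = u \<and> \<sigma> ! j = v}"

definition undir :: "edges \<Rightarrow> edges \<Rightarrow> vertex \<Rightarrow> vertex \<Rightarrow> bool" where
  "undir E D a b \<longleftrightarrow> (a,b) \<in> E \<and> (a,b) \<notin> D \<and> (b,a) \<notin> D"

definition nonadj :: "edges \<Rightarrow> vertex \<Rightarrow> vertex \<Rightarrow> bool" where
  "nonadj E c d \<longleftrightarrow> c \<noteq> d \<and> (c,d) \<notin> E"

definition meek_R1 :: "edges \<Rightarrow> edges \<Rightarrow> vertex \<Rightarrow> vertex \<Rightarrow> bool" where
  "meek_R1 E D a b \<longleftrightarrow> undir E D a b \<and> (\<exists>c. (c,a) \<in> D \<and> nonadj E c b)"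

definition meek_R2 :: "edges \<Rightarrow> edges \<Rightarrow> vertex \<Rightarrow> vertex \<Rightarrow> bool" where
  "meek_R2 E D a b \<longleftrightarrow> undir E D a b \<and> (\<exists>c. (a,c) \<in> D \<and> (c,b) \<in> D)"

definition meek_R3 :: "edges \<Rightarrow> edges \<Rightarrow> vertex \<Rightarrow> vertex \<Rightarrow> bool" where
  "meek_R3 E D a b \<longleftrightarrow> undir E D a b \<and>
     (\<exists>c d. undir E D a c \<and> undir E D a d \<and> (c,b) \<in> D \<and> (d,b) \<in> D \<and> nonadj E c d)"

definition meek_R4 :: "edges \<Rightarrow> edges \<Rightarrow> vertex \<Rightarrow> vertex \<Rightarrow> bool" where
  "meek_R4 E D a c \<longleftrightarrow> undir E D a c \<and>
     (\<exists>b d. (b,c) \<in> D \<and> undir E D a d \<and> undir E D a b \<and> (d,b) \<in> D \<and> nonadj E c d)"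

definition meek_step :: "edges \<Rightarrow> edges \<Rightarrow> edges" where
  "meek_step E D = D \<union> {(a,b). meek_R1 E D a b \<or> meek_R2 E D a b \<or> meek_R3 E D a b \<or> meek_R4 E D a b}"

text \<open>Apply the rules repeatedly until nothing changes.  Every non-trivial round orients
  at least one new edge of the finite skeleton E, so card E rounds reach the fixpoint.\<close>
definition meek_closure :: "edges \<Rightarrow> edges \<Rightarrow> edges" where
  "meek_closure E D = (meek_step E ^^ card E) D"

text \<open>Intervening on I in the learner's graph (skeleton K_n) with true DAG K_n(sigma):
  R0, then Meek closure.\<close>
definition intervene :: "nat \<Rightarrow> vertex list \<Rightarrow> edges \<Rightarrow> vertex set \<Rightarrow> edges" where
  "intervene n \<sigma> D I = meek_closure (Kn n)
     (D \<union> {(u,v) \<in> dag_of \<sigma> \<inter> Kn n. (u \<in> I) \<noteq> (v \<in> I)})"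

text \<open>A deterministic adaptive algorithm is a function from the current partially directed
  graph (represented by its oriented edges; the skeleton is always K_n) to the next
  intervention.  run n alg sigma m is the learner's graph after the first m interventions.\<close>
primrec run :: "nat \<Rightarrow> (edges \<Rightarrow> vertex set) \<Rightarrow> vertex list \<Rightarrow> nat \<Rightarrow> edges" where
  "run n alg \<sigma> 0 = {}"
| "run n alg \<sigma> (Suc m) = intervene n \<sigma> (run n alg \<sigma> m) (alg (run n alg \<sigma> m))"

definition fully_oriented :: "edges \<Rightarrow> edges \<Rightarrow> bool" where
  "fully_oriented E D \<longleftrightarrow> (\<forall>(a,b) \<in> E. (a,b) \<in> D \<or> (b,a) \<in> D)"

definition num_interventions :: "nat \<Rightarrow> (edges \<Rightarrow> vertex set) \<Rightarrow> vertex list \<Rightarrow> nat" where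
  "num_interventions n alg \<sigma> = (LEAST m. fully_oriented (Kn n) (run n alg \<sigma> m))"

definition interventions :: "nat \<Rightarrow> (edges \<Rightarrow> vertex set) \<Rightarrow> vertex list \<Rightarrow> vertex set set" where
  "interventions n alg \<sigma> = {alg (run n alg \<sigma> m) | m. m < num_interventions n alg \<sigma>}"

definition separating_system :: "vertex set \<Rightarrow> vertex set set \<Rightarrow> bool" where
  "separating_system S \<I> \<longleftrightarrow>
     (\<forall>i \<in> S. \<forall>j \<in> S. i \<noteq> j \<longrightarrow> (\<exists>I \<in> \<I>. (i \<in> I \<and> j \<notin> I) \<or> (j \<in> I \<and> i \<notin> I)))"

end

theory Submission
  imports Defs
begin

definition idx :: "vertex list \<Rightarrow> vertex \<Rightarrow> nat" where
  "idx \<sigma> v = (THE i. i < length \<sigma> \<and> \<sigma> ! i = v)"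

lemma idx_nth: "distinct \<sigma> \<Longrightarrow> i < length \<sigma> \<Longrightarrow> idx \<sigma> (\<sigma> ! i) = i"
  unfolding idx_def by (rule the_equality) (auto simp: nth_eq_iff_index_eq)

lemma idx_in: "distinct \<sigma> \<Longrightarrow> v \<in> set \<sigma> \<Longrightarrow> idx \<sigma> v < length \<sigma> \<and> \<sigma> ! idx \<sigma> v = v"
  unfolding idx_def by (rule theI') (rule distinct_Ex1)

lemma dag_index:
  assumes "distinct \<sigma>"
  shows "dag_of \<sigma> = {(u,v). u \<in> set \<sigma> \<and> v \<in> set \<sigma> \<and> idx \<sigma> u < idx \<sigma> v}"
proof (intro equalityI subsetI)
  fix x assume "x \<in> dag_of \<sigma>"
  then obtain i j where "i < j" "j < length \<sigma>" "x = (\<sigma>!i, \<sigma>!j)" by (auto simp: dag_of_def)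
  then show "x \<in> {(u,v). u \<in> set \<sigma> \<and> v \<in> set \<sigma> \<and> idx \<sigma> u < idx \<sigma> v}"
    using assms by (auto simp: idx_nth)
next
  fix x assume "x \<in> {(u,v). u \<in> set \<sigma> \<and> v \<in> set \<sigma> \<and> idx \<sigma> u < idx \<sigma> v}"
  then obtain u v where x: "x = (u,v)" "u \<in> set \<sigma>" "v \<in> set \<sigma>" "idx \<sigma> u < idx \<sigma> v" by auto
  then show "x \<in> dag_of \<sigma>" using idx_in[OF assms, of u] idx_in[OF assms, of v]
    unfolding dag_of_def by blast
qed

lemma idx_inj: "distinct \<sigma> \<Longrightarrow> inj_on (idx \<sigma>) (set \<sigma>)"
  by (metis idx_in inj_onI)

lemma dag_sort:
  assumes inj: "inj_on g (V n)"
  shows "total_ordering n (sort_key g [1..<Suc n]) \<and>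
         dag_of (sort_key g [1..<Suc n]) = {(u,v). u \<in> V n \<and> v \<in> V n \<and> g u < g v}"
proof -
  define \<tau> where "\<tau> = sort_key g [1..<Suc n]"
  have sV: "set \<tau> = V n" by (auto simp: \<tau>_def V_def)
  have dis: "distinct \<tau>" by (simp add: \<tau>_def)
  have so: "sorted (map g \<tau>)" by (simp add: \<tau>_def)
  have key: "idx \<tau> u < idx \<tau> v \<longleftrightarrow> g u < g v" if uV: "u \<in> V n" and vV: "v \<in> V n" for u v
  proof -
    have iu: "idx \<tau> u < length \<tau>" "\<tau> ! idx \<tau> u = u" using idx_in[OF dis] uV sV by auto
    have iv: "idx \<tau> v < length \<tau>" "\<tau> ! idx \<tau> v = v" using idx_in[OF dis] vV sV by auto
    have mono: "i \<le> j \<Longrightarrow> j < length \<tau> \<Longrightarrow> g (\<tau>!i) \<le> g (\<tau>!j)" for i j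
      using sorted_nth_mono[OF so, of i j] by simp
    show ?thesis
    proof
      assume lt: "idx \<tau> u < idx \<tau> v"
      have "g u \<le> g v" using mono[of "idx \<tau> u" "idx \<tau> v"] lt iu iv by simp
      moreover have "u \<noteq> v" using lt by auto
      hence "g u \<noteq> g v" using inj uV vV by (meson inj_onD)
      ultimately show "g u < g v" by simp
    next
      assume lt: "g u < g v"
      show "idx \<tau> u < idx \<tau> v"
      proof (rule ccontr)
        assume "\<not> idx \<tau> u < idx \<tau> v"
        then have "g v \<le> g u" using mono[of "idx \<tau> v" "idx \<tau> u"] iu iv by simp
        then show False using lt by simp
      qed
    qed
  qed
  have "dag_of \<tau> = {(u,v). u \<in> V n \<and> v \<in> V n \<and> g u < g v}"
    using dag_index[OF dis] sV key by auto
  then show ?thesis using dis sV by (simp add: \<tau>_def total_ordering_def)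
qed

definition JJ :: "nat \<Rightarrow> (edges \<Rightarrow> vertex set) \<Rightarrow> vertex list \<Rightarrow> nat \<Rightarrow> vertex set" where
  "JJ n alg \<sigma> k = alg (run n alg \<sigma> k)"

definition eqv :: "nat \<Rightarrow> (edges \<Rightarrow> vertex set) \<Rightarrow> vertex list \<Rightarrow> nat \<Rightarrow> vertex \<Rightarrow> vertex \<Rightarrow> bool" where
  "eqv n alg \<sigma> m u v \<longleftrightarrow> (\<forall>k<m. (u \<in> JJ n alg \<sigma> k) = (v \<in> JJ n alg \<sigma> k))"

definition convex :: "nat \<Rightarrow> (edges \<Rightarrow> vertex set) \<Rightarrow> vertex list \<Rightarrow> nat \<Rightarrow> bool" where
  "convex n alg \<sigma> m \<longleftrightarrow> (\<forall>k\<le>m. \<forall>u w v. (u,w) \<in> dag_of \<sigma> \<longrightarrow> (w,v) \<in> dag_of \<sigma> \<longrightarrow>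
      eqv n alg \<sigma> k u v \<longrightarrow> eqv n alg \<sigma> k u w)"

lemma eqv_refl: "eqv n alg \<sigma> m u u" by (simp add: eqv_def)
lemma eqv_sym: "eqv n alg \<sigma> m u v \<Longrightarrow> eqv n alg \<sigma> m v u" by (simp add: eqv_def)
lemma eqv_trans: "eqv n alg \<sigma> m u v \<Longrightarrow> eqv n alg \<sigma> m v w \<Longrightarrow> eqv n alg \<sigma> m u w" by (simp add: eqv_def)
lemma eqv_Suc: "eqv n alg \<sigma> (Suc m) u v \<longleftrightarrow> eqv n alg \<sigma> m u v \<and> ((u \<in> JJ n alg \<sigma> m) = (v \<in> JJ n alg \<sigma> m))"
  by (auto simp: eqv_def less_Suc_eq)
lemma eqv_mono: "eqv n alg \<sigma> m u v \<Longrightarrow> k \<le> m \<Longrightarrow> eqv n alg \<sigma> k u v" by (auto simp: eqv_def)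

lemma meek_step_pres:
  assumes D: "D \<subseteq> S \<inter> Kn n \<inter> {(u,v). \<not> R u v}"
    and tr: "trans S"
    and conv: "\<And>u w v. (u,w) \<in> S \<Longrightarrow> (w,v) \<in> S \<Longrightarrow> R u v \<Longrightarrow> R u w"
  shows "meek_step (Kn n) D \<subseteq> S \<inter> Kn n \<inter> {(u,v). \<not> R u v}"
proof
  fix x assume x: "x \<in> meek_step (Kn n) D"
  obtain a b where xab: "x = (a,b)" by (cases x)
  have DK: "D \<subseteq> Kn n" using D by blast
  show "x \<in> S \<inter> Kn n \<inter> {(u,v). \<not> R u v}"
  proof (cases "x \<in> D")
    case True thus ?thesis using D by blast
  next
    case False
    hence "meek_R1 (Kn n) D a b \<or> meek_R2 (Kn n) D a b \<or> meek_R3 (Kn n) D a b \<or> meek_R4 (Kn n) D a b"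
      using x xab by (simp add: meek_step_def)
    moreover have "\<not> meek_R1 (Kn n) D a b"
      using DK by (auto simp: meek_R1_def undir_def nonadj_def Kn_def)
    moreover have "\<not> meek_R3 (Kn n) D a b"
      by (auto simp: meek_R3_def undir_def nonadj_def Kn_def)
    moreover have "\<not> meek_R4 (Kn n) D a b"
      using DK by (auto simp: meek_R4_def undir_def nonadj_def Kn_def)
    ultimately have "meek_R2 (Kn n) D a b" by blast
    then obtain c where ab: "(a,b) \<in> Kn n" and ac: "(a,c) \<in> D" and cb: "(c,b) \<in> D"
      by (auto simp: meek_R2_def undir_def)
    have "(a,c) \<in> S" "(c,b) \<in> S" using ac cb D by auto
    hence "(a,b) \<in> S" using tr by (meson transD)
    moreover have "\<not> R a b"
    proof
      assume "R a b"
      then have "R a c" using conv \<open>(a,c) \<in> S\<close> \<open>(c,b) \<in> S\<close> by blast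
      then show False using ac D by blast
    qed
    ultimately show ?thesis using xab ab by blast
  qed
qed

lemma closure_pres:
  assumes D: "D \<subseteq> S \<inter> Kn n \<inter> {(u,v). \<not> R u v}" and tr: "trans S"
    and conv: "\<And>u w v. (u,w) \<in> S \<Longrightarrow> (w,v) \<in> S \<Longrightarrow> R u v \<Longrightarrow> R u w"
  shows "meek_closure (Kn n) D \<subseteq> S \<inter> Kn n \<inter> {(u,v). \<not> R u v}"
proof -
  have "(meek_step (Kn n) ^^ k) D \<subseteq> S \<inter> Kn n \<inter> {(u,v). \<not> R u v}" for k
  proof (induction k)
    case 0 then show ?case using D by simp
  next
    case (Suc k) then show ?case using meek_step_pres[OF Suc tr conv] by simp
  qed
  then show ?thesis by (simp add: meek_closure_def)
qed

lemma run_agree: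
  assumes H: "\<And>u v. \<not> eqv n alg \<sigma> m u v \<Longrightarrow> ((u,v) \<in> dag_of \<sigma> \<longleftrightarrow> (u,v) \<in> dag_of \<tau>)"
  shows "k \<le> m \<Longrightarrow> run n alg \<sigma> k = run n alg \<tau> k"
proof (induction k)
  case 0 show ?case by simp
next
  case (Suc k)
  hence IH: "run n alg \<sigma> k = run n alg \<tau> k" by simp
  have sep: "(u \<in> alg (run n alg \<sigma> k)) \<noteq> (v \<in> alg (run n alg \<sigma> k)) \<Longrightarrow> \<not> eqv n alg \<sigma> m u v" for u v
    using Suc.prems unfolding eqv_def JJ_def by (metis Suc_le_lessD)
  have "{(u,v) \<in> dag_of \<sigma> \<inter> Kn n. (u \<in> alg (run n alg \<sigma> k)) \<noteq> (v \<in> alg (run n alg \<sigma> k))}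
      = {(u,v) \<in> dag_of \<tau> \<inter> Kn n. (u \<in> alg (run n alg \<sigma> k)) \<noteq> (v \<in> alg (run n alg \<sigma> k))}"
    using H sep by blast
  then show ?case using IH by (simp add: intervene_def)
qed

lemma dag_trans: "distinct \<sigma> \<Longrightarrow> trans (dag_of \<sigma>)"
  by (simp add: dag_index trans_def)

lemma inv_run:
  assumes to: "total_ordering n \<sigma>" and cv: "convex n alg \<sigma> M"
  shows "k \<le> M \<Longrightarrow> run n alg \<sigma> k \<subseteq> dag_of \<sigma> \<inter> Kn n \<inter> {(u,v). \<not> eqv n alg \<sigma> k u v}"
proof (induction k)
  case 0 show ?case by simp
next
  case (Suc k)
  let ?S = "dag_of \<sigma> \<inter> Kn n \<inter> {(u,v). \<not> eqv n alg \<sigma> (Suc k) u v}"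
  have eq_mono: "eqv n alg \<sigma> (Suc k) u v \<Longrightarrow> eqv n alg \<sigma> k u v" for u v by (auto simp: eqv_def)
  have "run n alg \<sigma> k \<subseteq> ?S" using Suc eq_mono by auto
  moreover have "{(u,v) \<in> dag_of \<sigma> \<inter> Kn n. (u \<in> alg (run n alg \<sigma> k)) \<noteq> (v \<in> alg (run n alg \<sigma> k))} \<subseteq> ?S"
    by (auto simp: eqv_def JJ_def)
  ultimately have base: "run n alg \<sigma> k \<union> {(u,v) \<in> dag_of \<sigma> \<inter> Kn n. (u \<in> alg (run n alg \<sigma> k)) \<noteq> (v \<in> alg (run n alg \<sigma> k))} \<subseteq> ?S"
    by blast
  have tr: "trans (dag_of \<sigma>)" using to dag_trans by (simp add: total_ordering_def)
  have conv: "\<And>u w v. (u,w) \<in> dag_of \<sigma> \<Longrightarrow> (w,v) \<in> dag_of \<sigma> \<Longrightarrow> eqv n alg \<sigma> (Suc k) u v \<Longrightarrow> eqv n alg \<sigma> (Suc k) u w"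
    using cv Suc.prems unfolding convex_def by blast
  show ?case using closure_pres[where R="eqv n alg \<sigma> (Suc k)", OF base tr conv] by (simp add: intervene_def)
qed

lemma step:
  assumes to: "total_ordering n \<sigma>" and cv: "convex n alg \<sigma> m"
  shows "\<exists>\<tau>. total_ordering n \<tau> \<and> convex n alg \<tau> (Suc m)"
proof -
  define g where "g = idx \<sigma>"
  define E where "E = eqv n alg \<sigma>"
  have dis: "distinct \<sigma>" and s\<sigma>: "set \<sigma> = V n" using to by (auto simp: total_ordering_def)
  have dag\<sigma>: "dag_of \<sigma> = {(u,v). u \<in> V n \<and> v \<in> V n \<and> g u < g v}"
    using dag_index[OF dis] s\<sigma> g_def by simp
  have ginj: "inj_on g (V n)" using idx_inj[OF dis] s\<sigma> g_def by simp
  have finV: "finite (V n)" by (simp add: V_def)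
  have Erefl: "E k u u" for k u by (simp add: E_def eqv_refl)
  have Esym: "E k u v \<Longrightarrow> E k v u" for k u v by (simp add: E_def eqv_sym)
  have Etrans: "E k u v \<Longrightarrow> E k v w \<Longrightarrow> E k u w" for k u v w unfolding E_def by (rule eqv_trans)
  have Emono: "E k u v \<Longrightarrow> j \<le> k \<Longrightarrow> E j u v" for k j u v unfolding E_def by (rule eqv_mono)
  have cvg: "\<And>k u w v. k \<le> m \<Longrightarrow> u \<in> V n \<Longrightarrow> w \<in> V n \<Longrightarrow> v \<in> V n \<Longrightarrow> g u < g w \<Longrightarrow> g w < g v \<Longrightarrow> E k u v \<Longrightarrow> E k u w"
    using cv unfolding convex_def dag\<sigma> E_def by blast
  define J where "J = JJ n alg \<sigma> m"
  define c where "c v = card {w \<in> V n. g w < g v \<and> \<not> E m w v}" for v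
  define B where "B = Suc (Max (g ` V n))"
  define b where "b v = (if v \<in> J then 0 else 1::nat)" for v
  define g' where "g' v = (2 * c v + b v) * B + g v" for v
  have gB: "v \<in> V n \<Longrightarrow> g v < B" for v using finV by (simp add: B_def le_imp_less_Suc)
  have modB: "v \<in> V n \<Longrightarrow> g' v mod B = g v" for v using gB by (simp add: g'_def)
  have g'inj: "inj_on g' (V n)"
  proof (rule inj_onI)
    fix u v assume uv: "u \<in> V n" "v \<in> V n" "g' u = g' v"
    then have "g u = g v" using modB by metis
    then show "u = v" using ginj uv by (meson inj_onD)
  qed
  have b1: "b v \<le> 1" for v by (simp add: b_def)
  have F3: "g' u < g' v" if uV: "u \<in> V n" and vV: "v \<in> V n" and nE: "\<not> E m u v" and lt: "g u < g v" for u v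
  proof -
    let ?Su = "{w \<in> V n. g w < g u \<and> \<not> E m w u}"
    let ?Sv = "{w \<in> V n. g w < g v \<and> \<not> E m w v}"
    have sub: "?Su \<subseteq> ?Sv"
    proof
      fix w assume "w \<in> ?Su"
      then have wV: "w \<in> V n" and wu: "g w < g u" and nwu: "\<not> E m w u" by auto
      have "\<not> E m w v"
      proof
        assume "E m w v"
        then have "E m w u" using cvg[of m w u v] wV uV vV wu lt by simp
        then show False using nwu by simp
      qed
      then show "w \<in> ?Sv" using wV wu lt by auto
    qed
    have "u \<in> ?Sv" using uV lt nE by simp
    moreover have "u \<notin> ?Su" by simp
    ultimately have "?Su \<subset> ?Sv" using sub by blast
    hence "c u < c v" unfolding c_def using finV by (simp add: psubset_card_mono)
    hence le: "2 * c u + b u + 1 \<le> 2 * c v + b v" using b1[of u] by linarith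
    have "(2 * c u + b u + 1) * B \<le> (2 * c v + b v) * B" using le by (rule mult_right_mono) simp
    moreover have "(2 * c u + b u + 1) * B = (2 * c u + b u) * B + B" by simp
    ultimately show "g' u < g' v" using gB[OF uV] unfolding g'_def by linarith
  qed
  have F4: "g u < g v \<longleftrightarrow> g' u < g' v" if uV: "u \<in> V n" and vV: "v \<in> V n" and nE: "\<not> E m u v" for u v
  proof (cases "g u < g v")
    case True then show ?thesis using F3 uV vV nE by simp
  next
    case False
    have "u \<noteq> v" using nE Erefl by auto
    hence "g u \<noteq> g v" using ginj uV vV by (meson inj_onD)
    hence "g v < g u" using False by simp
    hence "g' v < g' u" using F3[OF vV uV] nE Esym by blast
    then show ?thesis using False by simp
  qed
  define \<tau> where "\<tau> = sort_key g' [1..<Suc n]"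
  have to\<tau>: "total_ordering n \<tau>" and dag\<tau>: "dag_of \<tau> = {(u,v). u \<in> V n \<and> v \<in> V n \<and> g' u < g' v}"
    using dag_sort[OF g'inj] by (simp_all add: \<tau>_def)
  have H: "(u,v) \<in> dag_of \<sigma> \<longleftrightarrow> (u,v) \<in> dag_of \<tau>" if "\<not> eqv n alg \<sigma> m u v" for u v
    using F4[of u v] that unfolding dag\<sigma> dag\<tau> E_def by auto
  have runeq: "k \<le> m \<Longrightarrow> run n alg \<sigma> k = run n alg \<tau> k" for k
    using run_agree[of n alg \<sigma> m \<tau>, OF H] by blast
  have eqvEq: "eqv n alg \<tau> k = E k" if "k \<le> Suc m" for k
  proof (intro ext)
    fix u v
    have "j < k \<Longrightarrow> JJ n alg \<tau> j = JJ n alg \<sigma> j" for j using runeq[of j] that by (simp add: JJ_def)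
    then show "eqv n alg \<tau> k u v = E k u v" by (simp add: eqv_def E_def)
  qed
  have F5: "{x \<in> V n. g x < g u \<and> \<not> E m x u} \<subseteq> {x \<in> V n. g x < g w \<and> \<not> E m x w}"
    if uV: "u \<in> V n" and wV: "w \<in> V n" and Euw: "E m u w" for u w
  proof
    fix x assume "x \<in> {x \<in> V n. g x < g u \<and> \<not> E m x u}"
    then have xV: "x \<in> V n" and xu: "g x < g u" and nxu: "\<not> E m x u" by auto
    have nxw: "\<not> E m x w" using nxu Euw Esym Etrans by blast
    have "g x < g w"
    proof (rule ccontr)
      assume "\<not> g x < g w"
      moreover have "g w \<noteq> g x"
      proof
        assume "g w = g x"
        then have "w = x" using ginj wV xV by (meson inj_onD)
        then show False using nxw Erefl by simp
      qed
      ultimately have "g w < g x" by simp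
      then have "E m w x" using cvg[of m w x u] wV xV uV xu Euw Esym by blast
      then show False using nxw Esym by blast
    qed
    then show "x \<in> {x \<in> V n. g x < g w \<and> \<not> E m x w}" using xV nxw by simp
  qed
  have ceq: "c u = c w" if "u \<in> V n" "w \<in> V n" "E m u w" for u w
  proof -
    have Ewu: "E m w u" using that Esym by blast
    have "{x \<in> V n. g x < g u \<and> \<not> E m x u} = {x \<in> V n. g x < g w \<and> \<not> E m x w}"
      by (rule subset_antisym[OF F5[OF that] F5[OF that(2,1) Ewu]])
    then show ?thesis by (simp add: c_def)
  qed
  have "convex n alg \<tau> (Suc m)"
    unfolding convex_def
  proof (intro allI impI)
    fix k u w v
    assume k: "k \<le> Suc m" and uw: "(u,w) \<in> dag_of \<tau>" and wv: "(w,v) \<in> dag_of \<tau>" and Ek: "eqv n alg \<tau> k u v"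
    have uV: "u \<in> V n" and wV: "w \<in> V n" and vV: "v \<in> V n" and l1: "g' u < g' w" and l2: "g' w < g' v"
      using uw wv dag\<tau> by auto
    have K: "E j u w" if j: "j \<le> m" and Ej: "E j u v" for j
    proof (rule ccontr)
      assume nuw: "\<not> E j u w"
      have "\<not> E m u w" using nuw Emono j by blast
      then have guw: "g u < g w" using F4[OF uV wV] l1 by simp
      have "\<not> E m w v"
      proof
        assume "E m w v"
        then have "E j w v" using Emono j by blast
        then show False using nuw Ej Esym Etrans by blast
      qed
      then have gwv: "g w < g v" using F4[OF wV vV] l2 by simp
      show False using cvg[OF j uV wV vV guw gwv Ej] nuw by simp
    qed
    show "eqv n alg \<tau> k u w"
    proof (cases "k \<le> m")
      case True then show ?thesis using K Ek eqvEq k by simp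
    next
      case False
      then have km: "k = Suc m" using k by simp
      have ESuc: "E (Suc m) x y \<longleftrightarrow> E m x y \<and> ((x \<in> J) = (y \<in> J))" for x y
        unfolding E_def J_def by (rule eqv_Suc)
      have Euv: "E m u v" and Juv: "(u \<in> J) = (v \<in> J)" using Ek eqvEq[of k] km ESuc by auto
      have Euw: "E m u w" using K[of m] Euv by simp
      have Ewv: "E m w v" using Euw Euv Esym Etrans by blast
      have cu: "c w = c u" using ceq[OF wV uV] Euw Esym by blast
      have cv': "c v = c u" using ceq[OF vV uV] Euv Esym by blast
      have buw: "b u \<le> b w"
      proof (rule ccontr)
        assume "\<not> b u \<le> b w"
        then have "b u = 1" "b w = 0" by (auto simp: b_def split: if_splits)
        then have "g' w = (2 * c u) * B + g w" "g' u = (2 * c u) * B + B + g u"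
          using cu by (simp_all add: g'_def)
        then show False using l1 gB[OF wV] by linarith
      qed
      have bwv: "b w \<le> b v"
      proof (rule ccontr)
        assume "\<not> b w \<le> b v"
        then have "b w = 1" "b v = 0" by (auto simp: b_def split: if_splits)
        then have "g' v = (2 * c u) * B + g v" "g' w = (2 * c u) * B + B + g w"
          using cu cv' by (simp_all add: g'_def)
        then show False using l2 gB[OF vV] by linarith
      qed
      have "b u = b v" using Juv by (simp add: b_def)
      then have "b u = b w" using buw bwv by simp
      then have "(u \<in> J) = (w \<in> J)" by (simp add: b_def split: if_splits)
      then have "E (Suc m) u w" using ESuc Euw by simp
      then show ?thesis using eqvEq km by simp
    qed
  qed
  then show ?thesis using to\<tau> by blast
qed

lemma exists_convex: "\<exists>\<sigma>. total_ordering n \<sigma> \<and> convex n alg \<sigma> m"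
proof (induction m)
  case 0
  have "total_ordering n [1..<Suc n]" by (auto simp: total_ordering_def V_def)
  moreover have "convex n alg [1..<Suc n] 0" by (simp add: convex_def eqv_def)
  ultimately show ?case by blast
next
  case (Suc m) then show ?case using step by blast
qed

theorem theorem2:
  fixes n :: nat and alg :: "edges \<Rightarrow> vertex set"
  assumes "n \<ge> 2"
    and "\<forall>\<sigma>. total_ordering n \<sigma> \<longrightarrow> (\<exists>m. fully_oriented (Kn n) (run n alg \<sigma> m))"
  shows "\<exists>\<sigma>. total_ordering n \<sigma> \<and> separating_system (V n) (interventions n alg \<sigma>)"
proof -
  let ?TO = "{\<sigma>. total_ordering n \<sigma>}"
  have "?TO \<subseteq> {xs. set xs \<subseteq> V n \<and> length xs \<le> n}"
    by (auto simp: total_ordering_def V_def dest: distinct_card)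
  then have finTO: "finite ?TO"
    using finite_lists_length_le[of "V n" n] by (auto simp: V_def intro: finite_subset)
  define N where "N = Max (num_interventions n alg ` ?TO)"
  obtain \<sigma> where to: "total_ordering n \<sigma>" and cv: "convex n alg \<sigma> N" using exists_convex by blast
  define M where "M = num_interventions n alg \<sigma>"
  have MN: "M \<le> N" using finTO to unfolding M_def N_def by (simp add: Max_ge)
  have full: "fully_oriented (Kn n) (run n alg \<sigma> M)"
    using assms(2) to unfolding M_def num_interventions_def by (metis LeastI_ex)
  have cvM: "convex n alg \<sigma> M" using cv MN by (auto simp: convex_def)
  have inv: "run n alg \<sigma> M \<subseteq> dag_of \<sigma> \<inter> Kn n \<inter> {(u,v). \<not> eqv n alg \<sigma> M u v}"
    using inv_run[OF to cvM] by simp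
  have "separating_system (V n) (interventions n alg \<sigma>)"
    unfolding separating_system_def
  proof (intro ballI impI)
    fix i j assume "i \<in> V n" "j \<in> V n" "i \<noteq> j"
    then have "(i,j) \<in> Kn n" by (simp add: Kn_def)
    then have "(i,j) \<in> run n alg \<sigma> M \<or> (j,i) \<in> run n alg \<sigma> M" using full by (auto simp: fully_oriented_def)
    then have "\<not> eqv n alg \<sigma> M i j" using inv eqv_sym by blast
    then obtain k where "k < M" "(i \<in> JJ n alg \<sigma> k) \<noteq> (j \<in> JJ n alg \<sigma> k)" by (auto simp: eqv_def)
    then show "\<exists>I \<in> interventions n alg \<sigma>. (i \<in> I \<and> j \<notin> I) \<or> (j \<in> I \<and> i \<notin> I)"
      unfolding interventions_def JJ_def M_def by blast
  qed
  then show ?thesis using to by blast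
qed

end
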